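(* Let $\gamma>0$, $\Delta\in[0,1)$, $\zeta\in(0,1]$ and suppose $\gamma<\frac{1+\Delta}{\zeta\sigma_{\max}^2}$ and $\frac{(1-\zeta)\gamma}{1-\Delta}\cdot\frac1n\operatorname{tr}(\boldsymbol A\boldsymbol A^T)<1$. Then $\|\mathcal K\|:=\sum_{t=0}^\infty\mathcal K(t)<1$.
   Context: $\boldsymbol A\in\mathbb R^{n\times d}$, $\sigma_1^2\ge\dots\ge\sigma_n^2\ge0$ the eigenvalues of $\boldsymbol A\boldsymbol A^T$, $\sigma_{\max}^2$ the largest. For $j\in[n]$: $\Omega_j=1-\gamma\zeta\sigma_j^2+\Delta$, $\lambda_{2,j},\lambda_{3,j}=\frac{-2\Delta+\Omega_j^2\pm\sqrt{\Omega_j^2(\Omega_j^2-4\Delta)}}{2}$ (complex square root if the argument is negative). The kernel is $\mathcal K(t)=\gamma^2\zeta(1-\zeta)H_2(t)$ with $H_2(t)=\frac1n\sum_{j=1}^n\frac{2\sigma_j^4}{\Omega_j^2-4\Delta}\big(-\Delta^{t+1}+\frac12\lambda_{2,j}^{t+1}+\frac12\lambda_{3,j}^{t+1}\big)$ (terms with $\Omega_j^2=4\Delta$ understood by continuity). *)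

theory Defs
  imports Complex_Main "Jordan_Normal_Form.Char_Poly"
begin

definition mat_trace :: "'a::comm_ring_1 mat \<Rightarrow> 'a" where
  "mat_trace M = (\<Sum>i<dim_row M. M $$ (i,i))"

definition Omega :: "real \<Rightarrow> real \<Rightarrow> real \<Rightarrow> real \<Rightarrow> real" where
  "Omega \<gamma> \<zeta> \<Delta> s = 1 - \<gamma> * \<zeta> * s + \<Delta>"

definition lam2 :: "real \<Rightarrow> real \<Rightarrow> real \<Rightarrow> real \<Rightarrow> complex" where
  "lam2 \<gamma> \<zeta> \<Delta> s = (let w = Omega \<gamma> \<zeta> \<Delta> s in
     (complex_of_real (- 2 * \<Delta> + w^2) + csqrt (complex_of_real (w^2 * (w^2 - 4 * \<Delta>)))) / 2)"

definition lam3 :: "real \<Rightarrow> real \<Rightarrow> real \<Rightarrow> real \<Rightarrow> complex" where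
  "lam3 \<gamma> \<zeta> \<Delta> s = (let w = Omega \<gamma> \<zeta> \<Delta> s in
     (complex_of_real (- 2 * \<Delta> + w^2) - csqrt (complex_of_real (w^2 * (w^2 - 4 * \<Delta>)))) / 2)"

text \<open>The j-th summand of H_2(t) (before the factor 1/n), with s = sigma_j^2.
  When Omega_j^2 = 4 Delta the summand is defined by its continuous extension,
  which equals sigma_j^4 (t+1)^2 Delta^t.\<close>
definition H2_term :: "real \<Rightarrow> real \<Rightarrow> real \<Rightarrow> real \<Rightarrow> nat \<Rightarrow> complex" where
  "H2_term \<gamma> \<zeta> \<Delta> s t = (let w = Omega \<gamma> \<zeta> \<Delta> s in
     if w^2 = 4 * \<Delta> then complex_of_real (s^2 * (real t + 1)^2 * \<Delta>^t)
     else complex_of_real (2 * s^2 / (w^2 - 4 * \<Delta>)) *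
       (- complex_of_real (\<Delta>^(t+1)) + lam2 \<gamma> \<zeta> \<Delta> s ^ (t+1) / 2
        + lam3 \<gamma> \<zeta> \<Delta> s ^ (t+1) / 2))"

text \<open>H_2(t); s j = sigma_{j+1}^2 for j < n (0-based indexing).\<close>
definition H2 :: "nat \<Rightarrow> (nat \<Rightarrow> real) \<Rightarrow> real \<Rightarrow> real \<Rightarrow> real \<Rightarrow> nat \<Rightarrow> complex" where
  "H2 n s \<gamma> \<zeta> \<Delta> t = (1 / of_nat n) * (\<Sum>j<n. H2_term \<gamma> \<zeta> \<Delta> (s j) t)"

definition kernel :: "nat \<Rightarrow> (nat \<Rightarrow> real) \<Rightarrow> real \<Rightarrow> real \<Rightarrow> real \<Rightarrow> nat \<Rightarrow> complex" where
  "kernel n s \<gamma> \<zeta> \<Delta> t = complex_of_real (\<gamma>^2 * \<zeta> * (1 - \<zeta>)) * H2 n s \<gamma> \<zeta> \<Delta> t"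

end

theory Submission
  imports Defs "Jordan_Normal_Form.Schur_Decomposition"
begin

hide_const (open) Coset.kernel

lemma trace_comm:
  fixes X Y :: "'a::comm_ring_1 mat"
  assumes X: "X \<in> carrier_mat n m" and Y: "Y \<in> carrier_mat m n"
  shows "mat_trace (X * Y) = mat_trace (Y * X)"
proof -
  have "mat_trace (X * Y) = (\<Sum>i<n. \<Sum>k<m. X $$ (i,k) * Y $$ (k,i))"
    using X Y by (simp add: mat_trace_def scalar_prod_def lessThan_atLeast0)
  also have "\<dots> = (\<Sum>k<m. \<Sum>i<n. Y $$ (k,i) * X $$ (i,k))"
    by (subst sum.swap) (simp add: mult.commute)
  also have "\<dots> = mat_trace (Y * X)"
    using X Y by (simp add: mat_trace_def scalar_prod_def lessThan_atLeast0)
  finally show ?thesis .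
qed

lemma trace_eigs:
  fixes M :: "real mat"
  assumes M: "M \<in> carrier_mat n n"
    and c: "char_poly M = (\<Prod>j<n. [:- s j, 1:])"
  shows "mat_trace M = (\<Sum>j<n. s j)"
proof -
  define es where "es = map s [0..<n]"
  have c': "char_poly M = (\<Prod>e\<leftarrow>es. [:- e, 1:])"
    unfolding c es_def
    by (simp add: prod.distinct_set_conv_list[symmetric] lessThan_atLeast0 o_def)
  obtain B P Q where sch: "schur_decomposition M es = (B,P,Q)"
    by (cases "schur_decomposition M es") auto
  from schur_decomposition[OF M c' sch]
  have w: "similar_mat_wit M B P Q" and d: "diag_mat B = es" by auto
  from w M have B: "B \<in> carrier_mat n n" and P: "P \<in> carrier_mat n n" and Q: "Q \<in> carrier_mat n n"
    and QP: "Q * P = 1\<^sub>m n" and MB: "M = P * B * Q"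
    unfolding similar_mat_wit_def Let_def by auto
  have "mat_trace M = mat_trace (P * (B * Q))" using MB P B Q by (simp add: assoc_mult_mat)
  also have "\<dots> = mat_trace ((B * Q) * P)" by (rule trace_comm[OF P]) (use B Q in auto)
  also have "(B * Q) * P = B" using B Q P QP by (simp add: assoc_mult_mat)
  also have "mat_trace B = sum_list (diag_mat B)"
    using B by (simp add: mat_trace_def diag_mat_def sum_list_sum_nth lessThan_atLeast0)
  also have "\<dots> = (\<Sum>j<n. s j)" unfolding d es_def
    by (simp add: sum.distinct_set_conv_list[symmetric] lessThan_atLeast0 o_def)
  finally show ?thesis .
qed

lemma n_pow_sums:
  fixes z :: real assumes "norm z < 1"
  shows "(\<lambda>n. of_nat n * z ^ n) sums (z / (1 - z)^2)"
proof -
  have "(\<lambda>n. z * (of_nat (Suc n) * z ^ n)) sums (z * (1 / (1 - z)^2))"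
    by (rule sums_mult[OF geometric_deriv_sums[OF assms]])
  hence "(\<lambda>n. of_nat (Suc n) * z ^ Suc n) sums (z / (1 - z)^2)"
    by (simp add: algebra_simps)
  hence "(\<lambda>n. of_nat n * z ^ n) sums (z / (1 - z)^2 + 0)"
    using sums_Suc_iff[of "\<lambda>n. of_nat n * z ^ n"] by simp
  thus ?thesis by simp
qed

lemma sq_pow_sums:
  fixes z :: real assumes z: "norm z < 1"
  shows "(\<lambda>n. (real n + 1)^2 * z ^ n) sums ((1 + z) / (1 - z)^3)"
proof -
  have d: "((\<lambda>z. z / (1 - z)^2) has_field_derivative ((1 + z) / (1 - z)^3)) (at z)"
  proof -
    have ne: "1 - z \<noteq> 0" using z by auto
    have "((\<lambda>z. z / (1 - z)^2) has_field_derivative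
        ((1 * (1 - z)^2 - z * (2 * (1 - z) ^ 1 * (-1))) / ((1 - z)^2 * (1 - z)^2))) (at z)"
      by (rule derivative_eq_intros refl | use ne in simp)+
    moreover have "(1 * (1 - z)^2 - z * (2 * (1 - z) ^ 1 * (-1))) / ((1 - z)^2 * (1 - z)^2)
        = (1 + z) / (1 - z)^3"
    proof -
      have a: "1 * (1 - z)^2 - z * (2 * (1 - z) ^ 1 * (-1)) = (1 + z) * (1 - z)" by (simp add: power2_eq_square algebra_simps)
      have b: "(1 - z)^2 * (1 - z)^2 = (1 - z)^3 * (1 - z)" by (simp add: power2_eq_square power3_eq_cube)
      show ?thesis unfolding a b using ne by simp
    qed
    ultimately show ?thesis by simp
  qed
  have "(\<lambda>n. diffs (\<lambda>n. of_nat n) n * z ^ n) sums ((1 + z) / (1 - z)^3)"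
    by (rule termdiffs_sums_strong[OF n_pow_sums d, of 1]) (use z in auto)
  thus ?thesis by (simp add: diffs_def power2_eq_square algebra_simps)
qed


lemma pow_suc_sums:
  fixes z :: complex assumes "norm z < 1"
  shows "(\<lambda>n. z ^ (n+1)) sums (z / (1 - z))"
  using sums_mult[OF geometric_sums[OF assms], of z] by (simp add: field_simps)

lemma roots_facts:
  fixes w D p :: real
  assumes wp: "w > 0" and wl: "w < 1 + \<Delta>" and d0: "0 \<le> \<Delta>" and d1: "\<Delta> < 1"
  defines "r \<equiv> csqrt (complex_of_real (w^2 * (w^2 - 4 * \<Delta>)))"
  defines "L2 \<equiv> (complex_of_real (- 2 * \<Delta> + w^2) + r) / 2"
  defines "L3 \<equiv> (complex_of_real (- 2 * \<Delta> + w^2) - r) / 2"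
  shows "L2 + L3 = complex_of_real (w^2 - 2*\<Delta>)" "L2 * L3 = complex_of_real (\<Delta>^2)"
    "norm L2 < 1" "norm L3 < 1"
proof -
  show "L2 + L3 = complex_of_real (w^2 - 2*\<Delta>)" unfolding L2_def L3_def by (simp add: field_simps)
  have rr: "r^2 = complex_of_real (w^2 * (w^2 - 4 * \<Delta>))" unfolding r_def by simp
  have "L2 * L3 = (complex_of_real (- 2 * \<Delta> + w^2)^2 - r^2) / 4"
    unfolding L2_def L3_def by (simp add: field_simps power2_eq_square)
  also have "\<dots> = complex_of_real (((- 2 * \<Delta> + w^2)^2 - w^2 * (w^2 - 4 * \<Delta>)) / 4)"
    unfolding rr by simp
  also have "((- 2 * \<Delta> + w^2)^2 - w^2 * (w^2 - 4 * \<Delta>)) / 4 = \<Delta>^2"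
    by (simp add: algebra_simps power2_eq_square)
  finally show LL: "L2 * L3 = complex_of_real (\<Delta>^2)" .
  have "norm L2 < 1 \<and> norm L3 < 1"
  proof (cases "w^2 * (w^2 - 4 * \<Delta>) \<ge> 0")
    case True
    define D where "D = w^2 * (w^2 - 4 * \<Delta>)"
    define p where "p = w^2 - 2 * \<Delta>"
    have r: "r = complex_of_real (sqrt D)" unfolding r_def D_def using True csqrt_of_real by simp
    have L2r: "L2 = complex_of_real ((p + sqrt D)/2)" unfolding L2_def r p_def by simp
    have L3r: "L3 = complex_of_real ((p - sqrt D)/2)" unfolding L3_def r p_def by simp
    have w4: "w^2 \<ge> 4 * \<Delta>" using True wp by (simp add: zero_le_mult_iff)
    have wsq: "w^2 < (1 + \<Delta>)^2" using wp wl by (intro power_strict_mono) auto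
    have dd: "\<Delta> * \<Delta> < 1" proof -
      have "\<Delta> * \<Delta> \<le> \<Delta> * 1" using d0 d1 by (intro mult_left_mono) auto
      thus ?thesis using d1 by linarith
    qed
    have "(1 + \<Delta>)^2 = 1 + 2 * \<Delta> + \<Delta> * \<Delta>" by (simp add: power2_eq_square algebra_simps)
    hence y: "2 - p > 0" unfolding p_def using wsq dd by linarith
    have "D < (2 - p)^2" unfolding D_def p_def using wsq by (simp add: power2_eq_square algebra_simps) 
    hence "sqrt D < sqrt ((2 - p)^2)" by (intro real_sqrt_less_mono)
    hence s1: "sqrt D < 2 - p" using y by simp
    have pp: "p \<ge> 0" unfolding p_def using w4 d0 by simp
    have "D \<le> p^2" unfolding D_def p_def by (simp add: power2_eq_square algebra_simps)
    hence "sqrt D \<le> sqrt (p^2)" by (intro real_sqrt_le_mono)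
    hence s2: "sqrt D \<le> p" using pp by simp
    have sd: "sqrt D \<ge> 0" using True D_def by simp
    have fin: "\<And>q. q < 2 - p \<Longrightarrow> q \<le> p \<Longrightarrow> 0 \<le> q \<Longrightarrow> \<bar>(p + q)/2\<bar> < 1 \<and> \<bar>(p - q)/2\<bar> < 1"
      by (auto simp: abs_if)
    show ?thesis unfolding L2r L3r norm_of_real using fin[OF s1 s2 sd] by auto
  next
    case False
    define D where "D = w^2 * (w^2 - 4 * \<Delta>)"
    have r: "r = \<i> * complex_of_real (sqrt (- D))" 
      unfolding r_def D_def using False by (simp add: csqrt_of_real')
    have c: "cnj L2 = L3" unfolding L2_def L3_def r by (simp add: complex_cnj_diff)
    have "norm L2 ^ 2 = norm (L2 * cnj L2)" by (simp add: norm_mult power2_eq_square)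
    also have "\<dots> = \<Delta>^2" unfolding c LL norm_of_real by simp
    finally have "norm L2 = \<Delta>" using d0 by (simp add: power2_eq_iff_nonneg)
    moreover have "norm L3 = norm L2" using c by (metis complex_mod_cnj)
    ultimately show ?thesis using d1 by simp
  qed
  thus "norm L2 < 1" "norm L3 < 1" by auto
qed

lemma term_sums:
  assumes s0: "s \<ge> 0" and g: "\<gamma> > 0" and z: "\<zeta> > 0" and d0: "0 \<le> \<Delta>" and d1: "\<Delta> < 1"
    and lt: "\<gamma> * \<zeta> * s < 1 + \<Delta>"
  shows "(\<lambda>t. H2_term \<gamma> \<zeta> \<Delta> s t) sums
     complex_of_real (s^2 * (1 + \<Delta>) / ((1 - \<Delta>) * ((1 + \<Delta>)^2 - (Omega \<gamma> \<zeta> \<Delta> s)^2)))"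
proof -
  define w where "w = Omega \<gamma> \<zeta> \<Delta> s"
  have wdef: "w = 1 - \<gamma> * \<zeta> * s + \<Delta>" unfolding w_def Omega_def by simp
  have wp: "w > 0" using lt wdef by simp
  show ?thesis
  proof (cases "s = 0")
    case True
    have "w = 1 + \<Delta>" using wdef True by simp
    hence "w^2 - 4 * \<Delta> = (1 - \<Delta>)^2" by (simp add: power2_eq_square algebra_simps)
    moreover have "(1 - \<Delta>)^2 > 0" using d1 by simp
    ultimately have "w^2 \<noteq> 4 * \<Delta>" by linarith
    hence "\<And>t. H2_term \<gamma> \<zeta> \<Delta> s t = 0" unfolding H2_term_def Let_def w_def[symmetric] using True by simp
    thus ?thesis using True by simp
  next
    case False
    hence sp: "s > 0" using s0 by simp
    have wl: "w < 1 + \<Delta>" using wdef sp g z by simp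
    have E: "(1 + \<Delta>)^2 - w^2 > 0" using wp wl
      by (simp add: power_strict_mono)
    show ?thesis
    proof (cases "w^2 = 4 * \<Delta>")
      case True
      have h: "\<And>t. H2_term \<gamma> \<zeta> \<Delta> s t = complex_of_real (s^2 * ((real t + 1)^2 * \<Delta>^t))"
        unfolding H2_term_def Let_def w_def[symmetric] using True by simp
      have ser: "(\<lambda>t. s^2 * ((real t + 1)^2 * \<Delta>^t)) sums (s^2 * ((1 + \<Delta>) / (1 - \<Delta>)^3))"
        by (rule sums_mult, rule sq_pow_sums) (use d0 d1 in simp)
      have eq: "s^2 * ((1 + \<Delta>) / (1 - \<Delta>)^3) = s^2 * (1 + \<Delta>) / ((1 - \<Delta>) * ((1 + \<Delta>)^2 - w^2))"
        unfolding True by (simp add: power2_eq_square power3_eq_cube algebra_simps)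
      show ?thesis unfolding h w_def[symmetric]
        by (rule iffD2[OF sums_of_real_iff], rule ser[unfolded eq])
    next
      case False
      define r where "r = csqrt (complex_of_real (w^2 * (w^2 - 4 * \<Delta>)))"
      define L2 where "L2 = (complex_of_real (- 2 * \<Delta> + w^2) + r) / 2"
      define L3 where "L3 = (complex_of_real (- 2 * \<Delta> + w^2) - r) / 2"
      note rf = roots_facts[OF wp wl d0 d1, folded r_def, folded L2_def L3_def]
      define c where "c = complex_of_real (2 * s^2 / (w^2 - 4 * \<Delta>))"
      have h: "\<And>t. H2_term \<gamma> \<zeta> \<Delta> s t = c * (- complex_of_real (\<Delta>^(t+1)) + L2^(t+1)/2 + L3^(t+1)/2)"
        unfolding H2_term_def Let_def w_def[symmetric] lam2_def lam3_def c_def L2_def L3_def r_def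
        using False by simp
      have dn: "norm (complex_of_real \<Delta>) < 1" using d0 d1 by simp
      have dser: "(\<lambda>n. complex_of_real (\<Delta>^(n+1))) sums (complex_of_real \<Delta> / (1 - complex_of_real \<Delta>))"
        using pow_suc_sums[OF dn] by (simp add: of_real_power)
      have "(\<lambda>t. c * (- complex_of_real (\<Delta>^(t+1)) + L2^(t+1)/2 + L3^(t+1)/2)) sums
          (c * (- (complex_of_real \<Delta> / (1 - complex_of_real \<Delta>)) + L2 / (1 - L2) / 2 + L3 / (1 - L3) / 2))"
        by (intro sums_mult sums_add sums_minus sums_divide dser pow_suc_sums rf)
      moreover have "c * (- (complex_of_real \<Delta> / (1 - complex_of_real \<Delta>)) + L2 / (1 - L2) / 2 + L3 / (1 - L3) / 2)
          = complex_of_real (s^2 * (1 + \<Delta>) / ((1 - \<Delta>) * ((1 + \<Delta>)^2 - w^2)))"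
      proof -
        have n2: "1 - L2 \<noteq> 0" using rf(3) by auto
        have n3: "1 - L3 \<noteq> 0" using rf(4) by auto
        have pq: "1 - (L2 + L3) + L2 * L3 = (1 - L2) * (1 - L3)" by (simp add: algebra_simps)
        have u0: "L2 / (1 - L2) / 2 + L3 / (1 - L3) / 2 = ((L2 + L3) - 2 * (L2 * L3)) / (2 * (1 - (L2 + L3) + L2 * L3))"
          unfolding pq using n2 n3 by (simp add: divide_simps) (simp add: algebra_simps)
        have u: "L2 / (1 - L2) / 2 + L3 / (1 - L3) / 2 =
           complex_of_real ((w^2 - 2 * \<Delta> - 2 * \<Delta>^2) / (2 * (1 - (w^2 - 2 * \<Delta>) + \<Delta>^2)))"
          unfolding u0 rf(1) rf(2) by simp
        have "c * (- (complex_of_real \<Delta> / (1 - complex_of_real \<Delta>)) + L2 / (1 - L2) / 2 + L3 / (1 - L3) / 2)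
          = complex_of_real (2 * s^2 / (w^2 - 4 * \<Delta>) * (- (\<Delta> / (1 - \<Delta>)) +
               (w^2 - 2 * \<Delta> - 2 * \<Delta>^2) / (2 * (1 - (w^2 - 2 * \<Delta>) + \<Delta>^2))))"
          unfolding add.assoc u unfolding c_def by simp
        also have "2 * s^2 / (w^2 - 4 * \<Delta>) * (- (\<Delta> / (1 - \<Delta>)) +
               (w^2 - 2 * \<Delta> - 2 * \<Delta>^2) / (2 * (1 - (w^2 - 2 * \<Delta>) + \<Delta>^2)))
           = s^2 * (1 + \<Delta>) / ((1 - \<Delta>) * ((1 + \<Delta>)^2 - w^2))"
        proof -
          have e1: "w^2 - 4 * \<Delta> \<noteq> 0" using False by simp
          have e2: "1 - \<Delta> \<noteq> 0" using d1 by simp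
          have e3: "1 - (w^2 - 2 * \<Delta>) + \<Delta>^2 = (1 + \<Delta>)^2 - w^2" by (simp add: power2_eq_square algebra_simps)
          have e4: "(1 + \<Delta>)^2 - w^2 \<noteq> 0" using E by simp
          define K where "K = w^2 - 4 * \<Delta>"
          define E where "E = (1 + \<Delta>)^2 - w^2"
          have num: "- (2 * \<Delta> * E) + (1 - \<Delta>) * (w^2 - 2 * \<Delta> - 2 * \<Delta>^2) = (1 + \<Delta>) * K"
            unfolding K_def E_def by (simp add: power2_eq_square algebra_simps)
          have inner: "- (\<Delta> / (1 - \<Delta>)) + (w^2 - 2 * \<Delta> - 2 * \<Delta>^2) / (2 * E) = (1 + \<Delta>) * K / (2 * (1 - \<Delta>) * E)"
            using e2 e4 num[symmetric] unfolding E_def[symmetric] by (simp add: divide_simps; (simp add: algebra_simps)?)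
          show ?thesis unfolding e3 K_def[symmetric] E_def[symmetric] inner using e1 e2 e4
            unfolding K_def[symmetric] E_def[symmetric] by (simp add: divide_simps; (simp add: algebra_simps)?)
        qed
        finally show ?thesis .
      qed
      ultimately show ?thesis unfolding h w_def[symmetric] by simp
    qed
  qed
qed


lemma term_bound:
  assumes s0: "s \<ge> 0" and g: "\<gamma> > 0" and z: "\<zeta> > 0" and d0: "0 \<le> \<Delta>" and d1: "\<Delta> < 1"
    and lt: "\<gamma> * \<zeta> * s < 1 + \<Delta>"
  shows "\<gamma>^2 * \<zeta> * (s^2 * (1 + \<Delta>) / ((1 - \<Delta>) * ((1 + \<Delta>)^2 - (Omega \<gamma> \<zeta> \<Delta> s)^2)))
     \<le> \<gamma> * s / (1 - \<Delta>)"
proof -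
  define w where "w = Omega \<gamma> \<zeta> \<Delta> s"
  have wdef: "w = 1 - \<gamma> * \<zeta> * s + \<Delta>" unfolding w_def Omega_def by simp
  have wp: "w > 0" using lt wdef by simp
  define E where "E = (1 + \<Delta>)^2 - w^2"
  have Ee: "E = \<gamma> * \<zeta> * s * (1 + \<Delta> + w)" unfolding E_def wdef by (simp add: power2_eq_square algebra_simps)
  show ?thesis
  proof (cases "s = 0")
    case True thus ?thesis by simp
  next
    case False
    hence sp: "s > 0" using s0 by simp
    have Ep: "E > 0" unfolding Ee using sp g z wp d0 by simp
    have key: "\<gamma>^2 * \<zeta> * (s^2 * (1 + \<Delta>)) \<le> \<gamma> * s * E"
    proof -
      have "\<gamma> * s * E = \<gamma>^2 * \<zeta> * (s^2 * (1 + \<Delta>)) + \<gamma>^2 * \<zeta> * s^2 * w"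
        unfolding Ee by (simp add: power2_eq_square algebra_simps)
      moreover have "\<gamma>^2 * \<zeta> * s^2 * w \<ge> 0" using g z wp by simp
      ultimately show ?thesis by linarith
    qed
    have pos: "(1 - \<Delta>) * E > 0" using Ep d1 by simp
    have "\<gamma>^2 * \<zeta> * (s^2 * (1 + \<Delta>) / ((1 - \<Delta>) * E)) = (\<gamma>^2 * \<zeta> * (s^2 * (1 + \<Delta>))) / ((1 - \<Delta>) * E)"
      by simp
    also have "\<dots> \<le> (\<gamma> * s * E) / ((1 - \<Delta>) * E)"
      by (rule divide_right_mono[OF key]) (use pos in simp)
    also have "\<dots> = \<gamma> * s / (1 - \<Delta>)" using Ep by simp
    finally show ?thesis unfolding E_def w_def .
  qed
qed

theorem proposition2:
  fixes A :: "real mat" and n d :: nat and s :: "nat \<Rightarrow> real"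
    and \<gamma> \<Delta> \<zeta> :: real
  assumes "n \<ge> 1"
    and "A \<in> carrier_mat n d"
    and "char_poly (A * A\<^sup>T) = (\<Prod>j<n. [:- s j, 1:])"
    and "\<And>i j. i \<le> j \<Longrightarrow> j < n \<Longrightarrow> s j \<le> s i"
    and "\<And>j. j < n \<Longrightarrow> s j \<ge> 0"
    and "\<gamma> > 0" and "0 \<le> \<Delta>" and "\<Delta> < 1" and "0 < \<zeta>" and "\<zeta> \<le> 1"
    and "\<gamma> * (\<zeta> * Max (s ` {..<n})) < 1 + \<Delta>"
    and "(1 - \<zeta>) * \<gamma> / (1 - \<Delta>) * (1 / real n) * mat_trace (A * A\<^sup>T) < 1"
  shows "\<exists>S::real. kernel n s \<gamma> \<zeta> \<Delta> sums complex_of_real S \<and> S < 1"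
proof -
  note a = assms
  define T where "T j = s j ^ 2 * (1 + \<Delta>) / ((1 - \<Delta>) * ((1 + \<Delta>)^2 - (Omega \<gamma> \<zeta> \<Delta> (s j))^2))" for j
  have M: "A * A\<^sup>T \<in> carrier_mat n n" using a(2) by simp
  have tr: "mat_trace (A * A\<^sup>T) = (\<Sum>j<n. s j)" by (rule trace_eigs[OF M a(3)])
  have lt: "\<gamma> * \<zeta> * s j < 1 + \<Delta>" if j: "j < n" for j
  proof -
    have "s j \<le> Max (s ` {..<n})" using j by (intro Max_ge) auto
    hence "\<gamma> * (\<zeta> * s j) \<le> \<gamma> * (\<zeta> * Max (s ` {..<n}))"
      using a(6,9) by (intro mult_left_mono) auto
    thus ?thesis using a(11) by (simp add: mult.assoc)
  qed
  have ts: "(\<lambda>t. H2_term \<gamma> \<zeta> \<Delta> (s j) t) sums complex_of_real (T j)" if "j < n" for j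
    unfolding T_def by (rule term_sums[OF a(5)[OF that] a(6) a(9) a(7) a(8) lt[OF that]])
  define S where "S = \<gamma>^2 * \<zeta> * (1 - \<zeta>) * ((1 / real n) * (\<Sum>j<n. T j))"
  have ser: "(\<lambda>t. complex_of_real (\<gamma>^2 * \<zeta> * (1 - \<zeta>)) * ((1 / of_nat n) * (\<Sum>j<n. H2_term \<gamma> \<zeta> \<Delta> (s j) t)))
      sums (complex_of_real (\<gamma>^2 * \<zeta> * (1 - \<zeta>)) * ((1 / of_nat n) * (\<Sum>j<n. complex_of_real (T j))))"
    by (intro sums_mult sums_sum ts) auto
  have val: "complex_of_real (\<gamma>^2 * \<zeta> * (1 - \<zeta>)) * ((1 / of_nat n) * (\<Sum>j<n. complex_of_real (T j)))
      = complex_of_real S" unfolding S_def by simp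
  have keq: "kernel n s \<gamma> \<zeta> \<Delta> = (\<lambda>t. complex_of_real (\<gamma>^2 * \<zeta> * (1 - \<zeta>)) * ((1 / of_nat n) * (\<Sum>j<n. H2_term \<gamma> \<zeta> \<Delta> (s j) t)))"
    by (simp add: fun_eq_iff Defs.kernel_def H2_def)
  have ks: "kernel n s \<gamma> \<zeta> \<Delta> sums complex_of_real S"
    unfolding keq val[symmetric] by (rule ser)
  have b: "\<gamma>^2 * \<zeta> * (1 - \<zeta>) * T j \<le> (1 - \<zeta>) * \<gamma> / (1 - \<Delta>) * s j" if j: "j < n" for j
  proof -
    have "\<gamma>^2 * \<zeta> * T j \<le> \<gamma> * s j / (1 - \<Delta>)"
      unfolding T_def by (rule term_bound[OF a(5)[OF j] a(6) a(9) a(7) a(8) lt[OF j]])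
    hence "(1 - \<zeta>) * (\<gamma>^2 * \<zeta> * T j) \<le> (1 - \<zeta>) * (\<gamma> * s j / (1 - \<Delta>))"
      using a(10) by (intro mult_left_mono) auto
    thus ?thesis by (simp add: algebra_simps)
  qed
  have "S = (1 / real n) * (\<Sum>j<n. \<gamma>^2 * \<zeta> * (1 - \<zeta>) * T j)"
    unfolding S_def sum_distrib_left[symmetric] by simp
  also have "\<dots> \<le> (1 / real n) * (\<Sum>j<n. (1 - \<zeta>) * \<gamma> / (1 - \<Delta>) * s j)"
    by (intro mult_left_mono sum_mono b) auto
  also have "\<dots> = (1 - \<zeta>) * \<gamma> / (1 - \<Delta>) * (1 / real n) * mat_trace (A * A\<^sup>T)"
    unfolding tr sum_distrib_left[symmetric] by simp
  also have "\<dots> < 1" by (rule a(12))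
  finally show ?thesis using ks by blast
qed

end
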